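(* Let $H=\sum_{i=1}^d\epsilon_i|e_i\rangle\langle e_i|$ be a non-degenerate Hamiltonian of a $d$-dimensional quantum system, and let $P\subseteq\mathbb{R}^2$ be the set of pairs $(E(\rho),S(\rho))$ over all full-rank passive states $\rho$. Let $\mathcal A:P\to[0,\infty)$ be the geometric athermality. Then $\mathcal A$ is monotonically non-increasing along every activation trajectory in $P$: if $t\mapsto(E(t),S(t))\in P$, $t\in[0,1]$, is a differentiable curve whose tangent vector $(u_E,u_S)$ satisfies $u_E\le0$ and $u_S\ge0$ at every point, then $t\mapsto\mathcal A(E(t),S(t))$ is non-increasing.
   Context: A state $\rho$ is passive if $\mathrm{tr}(HU\rho U^\dagger)\ge\mathrm{tr}(H\rho)$ for all unitaries $U$; passive states commute with $H$, so a full-rank passive state has the form $\rho=\sum_i p_i|e_i\rangle\langle e_i|$ with $p_i>0$. $E(\rho)=\mathrm{tr}[H\rho]$ and $S(\rho)=-\mathrm{tr}[\rho\log\rho]$. The $\epsilon$-$s$ ensemble is $\mathcal V(\rho)=\{(\epsilon_i,-\log p_i)\}_{i=1}^d\subset\mathbb{R}^2$, and $A(\rho)$ denotes the (Euclidean) area of the convex hull $\mathrm{conv}[\mathcal V(\rho)]$. The geometric athermality is $\mathcal A(E,S)=\inf\{A(\rho):\rho$ a full-rank passive state with $E(\rho)=E,\ S(\rho)=S\}$. A curve in the energy-entropy plane with tangent satisfying $u_E\le0$, $u_S\ge0$ everywhere is called an activation trajectory. *)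

theory Defs
  imports "HOL-Analysis.Analysis" "Jordan_Normal_Form.Matrix"
begin

text \<open>We work in the energy eigenbasis e_0, ..., e_(d-1) of H, so H = diag(eps).
  Indices run over {..<d}.\<close>

definition diag_op :: "nat \<Rightarrow> (nat \<Rightarrow> real) \<Rightarrow> complex mat" where
  "diag_op d f = Matrix.mat d d (\<lambda>(i,j). if i = j then complex_of_real (f i) else 0)"

definition mtrace :: "complex mat \<Rightarrow> complex" where
  "mtrace A = (\<Sum>i<dim_row A. A $$ (i,i))"

definition adj :: "complex mat \<Rightarrow> complex mat" where
  "adj U = Matrix.mat (dim_col U) (dim_row U) (\<lambda>(i,j). cnj (U $$ (j,i)))"

definition unitary_mat :: "nat \<Rightarrow> complex mat \<Rightarrow> bool" where
  "unitary_mat d U \<longleftrightarrow> U \<in> carrier_mat d d \<and> adj U * U = 1\<^sub>m d \<and> U * adj U = 1\<^sub>m d"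

definition is_passive :: "nat \<Rightarrow> complex mat \<Rightarrow> complex mat \<Rightarrow> bool" where
  "is_passive d H \<rho> \<longleftrightarrow>
     (\<forall>U. unitary_mat d U \<longrightarrow> Re (mtrace (H * (U * \<rho> * adj U))) \<ge> Re (mtrace (H * \<rho>)))"

definition full_rank_passive :: "nat \<Rightarrow> (nat \<Rightarrow> real) \<Rightarrow> (nat \<Rightarrow> real) \<Rightarrow> bool" where
  "full_rank_passive d eps p \<longleftrightarrow>
     (\<forall>i<d. p i > 0) \<and> (\<Sum>i<d. p i) = 1 \<and>
     is_passive d (diag_op d eps) (diag_op d p)"

definition energy :: "nat \<Rightarrow> (nat \<Rightarrow> real) \<Rightarrow> (nat \<Rightarrow> real) \<Rightarrow> real" where
  "energy d eps p = Re (mtrace (diag_op d eps * diag_op d p))"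

definition entropy :: "nat \<Rightarrow> (nat \<Rightarrow> real) \<Rightarrow> real" where
  "entropy d p = - (\<Sum>i<d. p i * ln (p i))"

definition eps_s_ensemble :: "nat \<Rightarrow> (nat \<Rightarrow> real) \<Rightarrow> (nat \<Rightarrow> real) \<Rightarrow> (real \<times> real) set" where
  "eps_s_ensemble d eps p = (\<lambda>i. (eps i, - ln (p i))) ` {..<d}"

definition hull_area :: "nat \<Rightarrow> (nat \<Rightarrow> real) \<Rightarrow> (nat \<Rightarrow> real) \<Rightarrow> real" where
  "hull_area d eps p = measure lborel (convex hull (eps_s_ensemble d eps p))"

definition ES_region :: "nat \<Rightarrow> (nat \<Rightarrow> real) \<Rightarrow> (real \<times> real) set" where
  "ES_region d eps = {(energy d eps p, entropy d p) | p. full_rank_passive d eps p}"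

definition geom_athermality :: "nat \<Rightarrow> (nat \<Rightarrow> real) \<Rightarrow> real \<Rightarrow> real \<Rightarrow> real" where
  "geom_athermality d eps E S =
     Inf {hull_area d eps p | p. full_rank_passive d eps p \<and> energy d eps p = E \<and> entropy d p = S}"

end

theory Submission
  imports Defs
begin


lemma sum_delta_mult:
  fixes f :: "'a \<Rightarrow> 'b::comm_ring_1"
  assumes "finite A" "k \<in> A"
  shows "(\<Sum>l\<in>A. (if k = l then a else 0) * f l) = a * f k"
proof -
  have "(\<Sum>l\<in>A. (if k = l then a else 0) * f l) = (\<Sum>l\<in>A. (if k = l then a * f k else 0))"
    by (rule sum.cong) auto
  also have "\<dots> = a * f k" using assms by simp
  finally show ?thesis .
qed

lemma trace_formula:
  assumes U: "U \<in> carrier_mat d d"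
  shows "mtrace (diag_op d eps * (U * diag_op d p * adj U)) =
    (\<Sum>k<d. complex_of_real (eps k) * (\<Sum>j<d. U $$ (k,j) * complex_of_real (p j) * cnj (U $$ (k,j))))"
proof -
  have dU: "dim_row U = d" "dim_col U = d" using U by auto
  have A: "(U * diag_op d p * adj U) $$ (k,k) = (\<Sum>j<d. U $$ (k,j) * complex_of_real (p j) * cnj (U $$ (k,j)))"
    if "k < d" for k
  proof -
    have "(U * diag_op d p * adj U) $$ (k,k) = (\<Sum>l<d. (U * diag_op d p) $$ (k,l) * cnj (U $$ (k,l)))"
      using that dU by (simp add: index_mult_mat adj_def diag_op_def scalar_prod_def atLeast0LessThan)
    also have "\<dots> = (\<Sum>j<d. U $$ (k,j) * complex_of_real (p j) * cnj (U $$ (k,j)))"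
    proof (rule sum.cong[OF refl])
      fix l assume l: "l \<in> {..<d}"
      have "(U * diag_op d p) $$ (k,l) = (\<Sum>m<d. U $$ (k,m) * (if m = l then complex_of_real (p m) else 0))"
        using that l dU by (simp add: index_mult_mat diag_op_def scalar_prod_def atLeast0LessThan)
      also have "\<dots> = U $$ (k,l) * complex_of_real (p l)"
        using l by (simp add: if_distrib cong: if_cong)
      finally show "(U * diag_op d p) $$ (k,l) * cnj (U $$ (k,l)) = U $$ (k,l) * complex_of_real (p l) * cnj (U $$ (k,l))" by simp
    qed
    finally show ?thesis .
  qed
  have "mtrace (diag_op d eps * (U * diag_op d p * adj U)) =
     (\<Sum>k<d. (\<Sum>l<d. (if k = l then complex_of_real (eps k) else 0) * (U * diag_op d p * adj U) $$ (l,k)))"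
    using dU by (simp add: mtrace_def index_mult_mat diag_op_def scalar_prod_def atLeast0LessThan adj_def)
  also have "\<dots> = (\<Sum>k<d. complex_of_real (eps k) * (U * diag_op d p * adj U) $$ (k,k))"
    by (rule sum.cong[OF refl], subst sum_delta_mult) auto
  also have "\<dots> = (\<Sum>k<d. complex_of_real (eps k) * (\<Sum>j<d. U $$ (k,j) * complex_of_real (p j) * cnj (U $$ (k,j))))"
    using A by simp
  finally show ?thesis .
qed

lemma energy_formula: "energy d eps p = (\<Sum>i<d. eps i * p i)"
proof -
  have "mtrace (diag_op d eps * diag_op d p) = (\<Sum>k<d. (\<Sum>l<d. (if k = l then complex_of_real (eps k) else 0) * (if l = k then complex_of_real (p l) else 0)))"
    by (simp add: mtrace_def index_mult_mat diag_op_def scalar_prod_def atLeast0LessThan)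
  also have "\<dots> = (\<Sum>k<d. complex_of_real (eps k * p k))"
    by (rule sum.cong[OF refl], subst sum_delta_mult) auto
  finally show ?thesis unfolding energy_def by simp
qed

lemma re_trace_formula:
  assumes U: "U \<in> carrier_mat d d"
  shows "Re (mtrace (diag_op d eps * (U * diag_op d p * adj U))) =
    (\<Sum>k<d. eps k * (\<Sum>j<d. (cmod (U $$ (k,j)))\<^sup>2 * p j))"
proof -
  have key: "z * complex_of_real r * cnj z = complex_of_real ((cmod z)\<^sup>2 * r)" for z r
    by (metis complex_norm_square mult.commute mult.left_commute of_real_mult)
  have "(\<Sum>k<d. complex_of_real (eps k) * (\<Sum>j<d. U $$ (k,j) * complex_of_real (p j) * cnj (U $$ (k,j))))
      = complex_of_real (\<Sum>k<d. eps k * (\<Sum>j<d. (cmod (U $$ (k,j)))\<^sup>2 * p j))"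
    by (simp only: key of_real_sum of_real_mult)
  then show ?thesis unfolding trace_formula[OF U] by (simp only: Re_complex_of_real)
qed
lemma unitary_row_col:
  assumes "unitary_mat d U"
  shows "\<And>k. k < d \<Longrightarrow> (\<Sum>j<d. (cmod (U $$ (k,j)))\<^sup>2) = 1"
    and "\<And>j. j < d \<Longrightarrow> (\<Sum>k<d. (cmod (U $$ (k,j)))\<^sup>2) = 1"
proof -
  have U: "U \<in> carrier_mat d d" "adj U * U = 1\<^sub>m d" "U * adj U = 1\<^sub>m d"
    using assms unfolding unitary_mat_def by auto
  have dU: "dim_row U = d" "dim_col U = d" using U by auto
  have key: "z * cnj z = complex_of_real ((cmod z)\<^sup>2)" for z
    by (metis complex_norm_square of_real_power)
  have key2: "cnj z * z = complex_of_real ((cmod z)\<^sup>2)" for z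
    by (metis complex_norm_square of_real_power mult.commute)
  fix k assume k: "k < d"
  have "(U * adj U) $$ (k,k) = (\<Sum>j<d. U $$ (k,j) * cnj (U $$ (k,j)))"
    using k dU by (simp add: index_mult_mat adj_def scalar_prod_def atLeast0LessThan)
  also have "\<dots> = complex_of_real (\<Sum>j<d. (cmod (U $$ (k,j)))\<^sup>2)"
    by (simp only: key of_real_sum)
  finally have c: "(U * adj U) $$ (k,k) = complex_of_real (\<Sum>j<d. (cmod (U $$ (k,j)))\<^sup>2)" .
  have "(U * adj U) $$ (k,k) = 1" using U(3) k by simp
  with c show "(\<Sum>j<d. (cmod (U $$ (k,j)))\<^sup>2) = 1" by (metis of_real_eq_1_iff)
next
  have U: "U \<in> carrier_mat d d" "adj U * U = 1\<^sub>m d" "U * adj U = 1\<^sub>m d"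
    using assms unfolding unitary_mat_def by auto
  have dU: "dim_row U = d" "dim_col U = d" using U by auto
  have key2: "cnj z * z = complex_of_real ((cmod z)\<^sup>2)" for z
    by (metis complex_norm_square of_real_power mult.commute)
  fix j assume j: "j < d"
  have "(adj U * U) $$ (j,j) = (\<Sum>k<d. cnj (U $$ (k,j)) * U $$ (k,j))"
    using j dU by (simp add: index_mult_mat adj_def scalar_prod_def atLeast0LessThan)
  also have "\<dots> = complex_of_real (\<Sum>k<d. (cmod (U $$ (k,j)))\<^sup>2)"
    by (simp only: key2 of_real_sum)
  finally have c: "(adj U * U) $$ (j,j) = complex_of_real (\<Sum>k<d. (cmod (U $$ (k,j)))\<^sup>2)" .
  have "(adj U * U) $$ (j,j) = 1" using U(2) j by simp
  with c show "(\<Sum>k<d. (cmod (U $$ (k,j)))\<^sup>2) = 1" by (metis of_real_eq_1_iff)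
qed

lemma abel_threshold:
  fixes e x :: "'a \<Rightarrow> real"
  assumes "finite I"
  shows "(\<forall>k\<in>I. c \<le> e k) \<Longrightarrow> (\<forall>\<tau>\<ge>c. 0 \<le> (\<Sum>k\<in>{k\<in>I. e k > \<tau>}. x k)) \<Longrightarrow> 0 \<le> (\<Sum>k\<in>I. x k)
    \<Longrightarrow> 0 \<le> (\<Sum>k\<in>I. (e k - c) * x k)"
  using assms
proof (induction I arbitrary: c rule: finite_psubset_induct)
  case (psubset I)
  show ?case
  proof (cases "I = {}")
    case True then show ?thesis by simp
  next
    case False
    define m where "m = Min (e ` I)"
    have mI: "m \<in> e ` I" unfolding m_def using False psubset.hyps by simp
    then obtain a where a: "a \<in> I" "e a = m" by auto
    have mle: "\<And>k. k \<in> I \<Longrightarrow> m \<le> e k" unfolding m_def using psubset.hyps by simp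
    have cm: "c \<le> m" using psubset.prems(1) a by auto
    define I' where "I' = {k\<in>I. e k > m}"
    have sub: "I' \<subset> I" unfolding I'_def using a by auto
    have fin': "finite I'" using sub psubset.hyps finite_subset by blast
    have IH: "0 \<le> (\<Sum>k\<in>I'. (e k - m) * x k)"
    proof (rule psubset.IH[OF sub])
      show "\<forall>k\<in>I'. m \<le> e k" unfolding I'_def by auto
      show "\<forall>\<tau>\<ge>m. 0 \<le> (\<Sum>k\<in>{k\<in>I'. e k > \<tau>}. x k)"
      proof (intro allI impI)
        fix \<tau> assume "\<tau> \<ge> m"
        then have "{k\<in>I'. e k > \<tau>} = {k\<in>I. e k > \<tau>}" unfolding I'_def by auto
        then show "0 \<le> (\<Sum>k\<in>{k\<in>I'. e k > \<tau>}. x k)" using psubset.prems(2) \<open>\<tau> \<ge> m\<close> cm by auto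
      qed
      show "0 \<le> sum x I'" using psubset.prems(2) cm unfolding I'_def by auto
    qed
    have "(\<Sum>k\<in>I. (e k - m) * x k) = (\<Sum>k\<in>I'. (e k - m) * x k)"
    proof -
      have "(\<Sum>k\<in>I. (e k - m) * x k) = (\<Sum>k\<in>I'. (e k - m) * x k) + (\<Sum>k\<in>I-I'. (e k - m) * x k)"
        using sub psubset.hyps by (metis (no_types, lifting) add.commute psubsetE sum.subset_diff)
      moreover have "(\<Sum>k\<in>I-I'. (e k - m) * x k) = 0"
        by (rule sum.neutral) (auto simp: I'_def dest: mle)
      ultimately show ?thesis by simp
    qed
    moreover have "(\<Sum>k\<in>I. (e k - c) * x k) = (m - c) * (\<Sum>k\<in>I. x k) + (\<Sum>k\<in>I. (e k - m) * x k)"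
      by (simp add: sum_distrib_left sum.distrib[symmetric] algebra_simps)
    ultimately show ?thesis using IH cm psubset.prems(3) by simp
  qed
qed

lemma ds_ineq:
  fixes B :: "nat \<Rightarrow> nat \<Rightarrow> real"
  assumes B0: "\<And>k j. k < d \<Longrightarrow> j < d \<Longrightarrow> B k j \<ge> 0"
    and rows: "\<And>k. k < d \<Longrightarrow> (\<Sum>j<d. B k j) = 1"
    and cols: "\<And>j. j < d \<Longrightarrow> (\<Sum>k<d. B k j) = 1"
    and anti: "\<And>i j. i < d \<Longrightarrow> j < d \<Longrightarrow> eps i < eps j \<Longrightarrow> p j \<le> p i"
  shows "(\<Sum>k<d. eps k * p k) \<le> (\<Sum>k<d. eps k * (\<Sum>j<d. B k j * p j))"
proof -
  define x where "x k = (\<Sum>j<d. B k j * p j) - p k" for k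
  have sumx: "(\<Sum>k<d. x k) = 0"
  proof -
    have "(\<Sum>k<d. \<Sum>j<d. B k j * p j) = (\<Sum>j<d. \<Sum>k<d. B k j * p j)" by (rule sum.swap)
    also have "\<dots> = (\<Sum>j<d. p j * (\<Sum>k<d. B k j))"
      by (simp add: sum_distrib_left mult.commute)
    also have "\<dots> = (\<Sum>j<d. p j)" using cols by simp
    finally show ?thesis unfolding x_def by (simp add: sum_subtractf)
  qed
  have thr: "0 \<le> (\<Sum>k\<in>{k\<in>{..<d}. eps k > \<tau>}. x k)" for \<tau>
  proof -
    define T where "T = {k\<in>{..<d}. eps k > \<tau>}"
    show ?thesis
    proof (cases "T = {}")
      case True then show ?thesis unfolding T_def[symmetric] by simp
    next
      case False
      have finT: "finite T" unfolding T_def by simp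
      define \<theta> where "\<theta> = Max (p ` T)"
      have th_ge: "\<And>k. k \<in> T \<Longrightarrow> p k \<le> \<theta>" unfolding \<theta>_def using finT by simp
      have "\<theta> \<in> p ` T" unfolding \<theta>_def using finT False by (intro Max_in) auto
      then obtain k0 where k0: "k0 \<in> T" "\<theta> = p k0" by auto
      have th_le: "\<And>j. j < d \<Longrightarrow> j \<notin> T \<Longrightarrow> \<theta> \<le> p j"
      proof -
        fix j assume j: "j < d" "j \<notin> T"
        then have "eps j < eps k0" using k0 unfolding T_def by auto
        then show "\<theta> \<le> p j" using anti[of j k0] j k0 unfolding T_def by auto
      qed
      define F where "F k j = (if k \<in> T then p j - p k else 0)" for k j
      define g where "g k = (if k \<in> T then \<theta> - p k else 0)" for k
      have "(\<Sum>k\<in>T. x k) = (\<Sum>k<d. (if k \<in> T then x k else 0))"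
      proof -
        have "(\<Sum>k<d. (if k \<in> T then x k else 0)) = (\<Sum>k<d. (if eps k > \<tau> then x k else 0))"
          by (rule sum.cong) (auto simp: T_def)
        also have "\<dots> = (\<Sum>k\<in>T. x k)"
          unfolding T_def by (rule sum.inter_filter[symmetric]) simp
        finally show ?thesis by simp
      qed
      also have "\<dots> = (\<Sum>k<d. \<Sum>j<d. B k j * F k j)"
      proof (rule sum.cong[OF refl])
        fix k assume k: "k \<in> {..<d}"
        show "(if k \<in> T then x k else 0) = (\<Sum>j<d. B k j * F k j)"
        proof (cases "k \<in> T")
          case True
          have "(\<Sum>j<d. B k j * F k j) = (\<Sum>j<d. B k j * p j) - p k * (\<Sum>j<d. B k j)"
            using True by (simp add: F_def right_diff_distrib sum_subtractf sum_distrib_left mult.commute)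
          then show ?thesis using True rows k unfolding x_def by simp
        qed (simp add: F_def)
      qed
      also have "\<dots> = (\<Sum>k<d. \<Sum>j<d. B k j * (F k j + g j - g k))"
      proof -
        have z: "(\<Sum>k<d. \<Sum>j<d. B k j * (g j - g k)) = 0"
        proof -
          have "(\<Sum>k<d. \<Sum>j<d. B k j * (g j - g k)) = (\<Sum>k<d. \<Sum>j<d. B k j * g j) - (\<Sum>k<d. g k * (\<Sum>j<d. B k j))"
            by (simp add: right_diff_distrib sum_subtractf sum_distrib_left mult.commute)
          also have "(\<Sum>k<d. \<Sum>j<d. B k j * g j) = (\<Sum>j<d. g j * (\<Sum>k<d. B k j))"
            by (subst sum.swap) (simp add: sum_distrib_left mult.commute)
          finally show ?thesis using rows cols by simp
        qed
        have "(\<Sum>k<d. \<Sum>j<d. B k j * (F k j + g j - g k)) = (\<Sum>k<d. \<Sum>j<d. B k j * F k j) + (\<Sum>k<d. \<Sum>j<d. B k j * (g j - g k))"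
          by (simp only: sum.distrib[symmetric]) (simp add: algebra_simps)
        then show ?thesis using z by simp
      qed
      also have "\<dots> \<ge> 0"
      proof (intro sum_nonneg mult_nonneg_nonneg)
        fix k j assume k: "k \<in> {..<d}" and j: "j \<in> {..<d}"
        show "0 \<le> B k j" using B0 k j by simp
        show "0 \<le> F k j + g j - g k"
          using th_ge[of j] th_le[of j] j unfolding F_def g_def by auto
      qed
      finally show ?thesis unfolding T_def by simp
    qed
  qed
  define c where "c = - (\<Sum>k<d. \<bar>eps k\<bar>)"
  have cle: "\<forall>k\<in>{..<d}. c \<le> eps k"
  proof
    fix k assume k: "k \<in> {..<d}"
    have "\<bar>eps k\<bar> \<le> (\<Sum>k<d. \<bar>eps k\<bar>)"
      using k by (intro member_le_sum) auto
    then show "c \<le> eps k" unfolding c_def by linarith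
  qed
  have "0 \<le> (\<Sum>k<d. (eps k - c) * x k)"
    using abel_threshold[of "{..<d}" c eps x] cle thr sumx by auto
  also have "(\<Sum>k<d. (eps k - c) * x k) = (\<Sum>k<d. eps k * x k) - c * (\<Sum>k<d. x k)"
    by (simp add: left_diff_distrib sum_subtractf sum_distrib_left)
  finally have "0 \<le> (\<Sum>k<d. eps k * x k)" using sumx by simp
  then show ?thesis unfolding x_def by (simp add: right_diff_distrib sum_subtractf)
qed

lemma antitone_imp_passive:
  assumes anti: "\<And>i j. i < d \<Longrightarrow> j < d \<Longrightarrow> eps i < eps j \<Longrightarrow> p j \<le> p i"
  shows "is_passive d (diag_op d eps) (diag_op d p)"
  unfolding is_passive_def
proof (intro allI impI)
  fix U assume U: "unitary_mat d U"
  have Uc: "U \<in> carrier_mat d d" using U unfolding unitary_mat_def by auto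
  have I: "(1\<^sub>m d :: complex mat) \<in> carrier_mat d d" by simp
  have "Re (mtrace (diag_op d eps * diag_op d p)) = (\<Sum>k<d. eps k * p k)"
    using energy_formula unfolding energy_def by simp
  also have "\<dots> \<le> (\<Sum>k<d. eps k * (\<Sum>j<d. (cmod (U $$ (k,j)))\<^sup>2 * p j))"
    by (rule ds_ineq[where B = "\<lambda>k j. (cmod (U $$ (k,j)))\<^sup>2"])
       (use unitary_row_col[OF U] anti in auto)
  also have "\<dots> = Re (mtrace (diag_op d eps * (U * diag_op d p * adj U)))"
    by (rule re_trace_formula[OF Uc, symmetric])
  finally show "Re (mtrace (diag_op d eps * diag_op d p)) \<le> Re (mtrace (diag_op d eps * (U * diag_op d p * adj U)))" .
qed

lemma passive_imp_antitone:
  assumes P: "is_passive d (diag_op d eps) (diag_op d p)" and ij: "i < d" "j < d" "eps i < eps j"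
  shows "p j \<le> p i"
proof -
  have ne: "i \<noteq> j" using ij by auto
  define \<sigma> where "\<sigma> k = (if k = i then j else if k = j then i else k)" for k
  have inv: "\<sigma> (\<sigma> k) = k" for k unfolding \<sigma>_def by auto
  have sd: "k < d \<Longrightarrow> \<sigma> k < d" for k unfolding \<sigma>_def using ij by auto
  have iff: "(a = \<sigma> k) = (k = \<sigma> a)" for a k using inv by metis
  define U :: "complex mat" where "U = Matrix.mat d d (\<lambda>(k,l). if l = \<sigma> k then 1 else 0)"
  have Uc: "U \<in> carrier_mat d d" unfolding U_def by simp
  have U1: "adj U * U = 1\<^sub>m d"
  proof (rule eq_matI)
    fix a b assume ab: "a < dim_row (1\<^sub>m d :: complex mat)" "b < dim_col (1\<^sub>m d :: complex mat)"
    then have ab': "a < d" "b < d" by auto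
    have "(adj U * U) $$ (a,b) = (\<Sum>k<d. (if a = \<sigma> k then 1 else 0) * (if b = \<sigma> k then 1 else 0))"
      using ab' by (simp add: U_def adj_def index_mult_mat scalar_prod_def atLeast0LessThan if_distrib cong: if_cong)
    also have "\<dots> = (\<Sum>k<d. (if k = \<sigma> a then (if b = a then 1 else 0) else 0))"
      by (rule sum.cong[OF refl]) (auto simp: iff inv)
    also have "\<dots> = (if b = a then 1 else 0)" using sd[OF ab'(1)] by simp
    finally show "(adj U * U) $$ (a,b) = 1\<^sub>m d $$ (a,b)" using ab' by auto
  qed (auto simp: U_def adj_def)
  have U2: "U * adj U = 1\<^sub>m d"
  proof (rule eq_matI)
    fix a b assume ab: "a < dim_row (1\<^sub>m d :: complex mat)" "b < dim_col (1\<^sub>m d :: complex mat)"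
    then have ab': "a < d" "b < d" by auto
    have "(U * adj U) $$ (a,b) = (\<Sum>l<d. (if l = \<sigma> a then 1 else 0) * (if l = \<sigma> b then 1 else 0))"
      using ab' by (simp add: U_def adj_def index_mult_mat scalar_prod_def atLeast0LessThan if_distrib cong: if_cong)
    also have "\<dots> = (\<Sum>l<d. (if l = \<sigma> a then (if b = a then 1 else 0) else 0))"
      by (rule sum.cong[OF refl]) (auto simp: iff inv)
    also have "\<dots> = (if b = a then 1 else 0)" using sd[OF ab'(1)] by simp
    finally show "(U * adj U) $$ (a,b) = 1\<^sub>m d $$ (a,b)" using ab' by auto
  qed (auto simp: U_def adj_def)
  have "unitary_mat d U" unfolding unitary_mat_def using Uc U1 U2 by auto
  with P have ineq: "Re (mtrace (diag_op d eps * diag_op d p)) \<le> Re (mtrace (diag_op d eps * (U * diag_op d p * adj U)))"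
    unfolding is_passive_def by blast
  have lhs: "Re (mtrace (diag_op d eps * diag_op d p)) = (\<Sum>k<d. eps k * p k)"
    using energy_formula unfolding energy_def by simp
  have rhs: "Re (mtrace (diag_op d eps * (U * diag_op d p * adj U))) = (\<Sum>k<d. eps k * p (\<sigma> k))"
  proof -
    have "Re (mtrace (diag_op d eps * (U * diag_op d p * adj U))) = (\<Sum>k<d. eps k * (\<Sum>l<d. (cmod (U $$ (k,l)))\<^sup>2 * p l))"
      by (rule re_trace_formula[OF Uc])
    also have "\<dots> = (\<Sum>k<d. eps k * p (\<sigma> k))"
    proof (rule sum.cong[OF refl])
      fix k assume k: "k \<in> {..<d}"
      have "(\<Sum>l<d. (cmod (U $$ (k,l)))\<^sup>2 * p l) = (\<Sum>l<d. if l = \<sigma> k then p l else 0)"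
        by (rule sum.cong[OF refl]) (use k in \<open>auto simp: U_def\<close>)
      also have "\<dots> = p (\<sigma> k)" using sd k by simp
      finally show "eps k * (\<Sum>l<d. (cmod (U $$ (k,l)))\<^sup>2 * p l) = eps k * p (\<sigma> k)" by simp
    qed
    finally show ?thesis .
  qed
  have diff: "(\<Sum>k<d. eps k * p (\<sigma> k)) - (\<Sum>k<d. eps k * p k)
      = (\<Sum>k<d. (if k = i then eps i * (p j - p i) else 0) + (if k = j then eps j * (p i - p j) else 0))"
    unfolding sum_subtractf[symmetric]
    by (rule sum.cong[OF refl]) (auto simp: \<sigma>_def algebra_simps ne)
  also have "\<dots> = eps i * (p j - p i) + eps j * (p i - p j)"
    using ij by (simp add: sum.distrib)
  finally have "0 \<le> (eps j - eps i) * (p i - p j)"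
    using ineq lhs rhs by (simp add: algebra_simps)
  then show ?thesis using ij(3) by (simp add: zero_le_mult_iff)
qed

lemma frp_iff:
  "full_rank_passive d eps p \<longleftrightarrow> (\<forall>i<d. p i > 0) \<and> (\<Sum>i<d. p i) = 1 \<and>
     (\<forall>i<d. \<forall>j<d. eps i < eps j \<longrightarrow> p j \<le> p i)"
  unfolding full_rank_passive_def using passive_imp_antitone antitone_imp_passive by metis



lemma emeasure_affine_image_1d:
  fixes A :: "real set"
  assumes a: "a > 0" and A: "A \<in> sets borel"
  shows "emeasure lborel ((\<lambda>y. a*y + t) ` A) = ennreal a * emeasure lborel A"
proof -
  define h where "h x = - t / a + (1/a) * x" for x
  have hm: "h \<in> borel_measurable borel" unfolding h_def by simp
  have "emeasure lborel A = emeasure (density (distr lborel borel h) (\<lambda>_. ennreal (\<bar>1/a\<bar>))) A"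
    using lborel_real_affine[of "1/a" "-t/a"] a unfolding h_def by simp
  also have "\<dots> = ennreal (1/a) * emeasure (distr lborel borel h) A"
    using A a by (simp add: emeasure_density nn_integral_cmult_indicator)
  also have "emeasure (distr lborel borel h) A = emeasure lborel (h -` A)"
    using A hm by (simp add: emeasure_distr)
  also have "h -` A = (\<lambda>y. a*y + t) ` A"
  proof
    show "h -` A \<subseteq> (\<lambda>y. a*y + t) ` A"
    proof
      fix x assume "x \<in> h -` A"
      then have "h x \<in> A" by simp
      moreover have "x = a * h x + t" unfolding h_def using a by (simp add: field_simps)
      ultimately show "x \<in> (\<lambda>y. a*y + t) ` A" by blast
    qed
    show "(\<lambda>y. a*y + t) ` A \<subseteq> h -` A"
      unfolding h_def using a by (auto simp: field_simps)
  qed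
  finally have "emeasure lborel A = ennreal (1/a) * emeasure lborel ((\<lambda>y. a*y + t) ` A)" .
  then have "ennreal a * emeasure lborel A = (ennreal a * ennreal (1/a)) * emeasure lborel ((\<lambda>y. a*y + t) ` A)"
    by (simp add: mult.assoc)
  also have "ennreal a * ennreal (1/a) = 1" using a by (simp add: ennreal_mult[symmetric])
  finally show ?thesis by simp
qed

lemma emeasure_affine_image_1d':
  fixes A :: "real set"
  assumes a: "a \<ge> 0" and A: "A \<in> sets borel"
  shows "emeasure lborel ((\<lambda>y. a*y + t) ` A) = ennreal a * emeasure lborel A"
proof (cases "a = 0")
  case True
  have "(\<lambda>y. a*y + t) ` A \<subseteq> {t}" using True by auto
  then have "emeasure lborel ((\<lambda>y. a*y + t) ` A) \<le> emeasure lborel {t}"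
    by (intro emeasure_mono) auto
  then show ?thesis using True by simp
next
  case False then show ?thesis using emeasure_affine_image_1d[of a A t] a A by simp
qed

lemma measure_shear_scale:
  fixes K :: "(real \<times> real) set"
  assumes K: "compact K" and a: "a \<ge> 0"
  shows "measure lborel ((\<lambda>(x,y). (x, a*y + b*x + c)) ` K) = a * measure lborel K"
proof -
  define f where "f = (\<lambda>(x::real,y::real). (x, a*y + b*x + c))"
  have fc: "continuous_on UNIV f" unfolding f_def
    by (auto intro!: continuous_intros simp: case_prod_beta)
  have fK: "compact (f ` K)" using compact_continuous_image[OF continuous_on_subset[OF fc] K] by auto
  have S: "sets (lborel \<Otimes>\<^sub>M lborel) = (sets borel :: (real\<times>real) set set)"
    by (metis lborel_prod sets_lborel)
  have Kb: "K \<in> sets (lborel \<Otimes>\<^sub>M lborel)"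
    unfolding S using K by (simp add: compact_imp_closed borel_closed)
  have fKb: "f ` K \<in> sets (lborel \<Otimes>\<^sub>M lborel)"
    unfolding S using fK by (simp add: compact_imp_closed borel_closed)
  have sec: "Pair x -` (f ` K) = (\<lambda>y. a*y + (b*x + c)) ` (Pair x -` K)" for x
  proof
    show "Pair x -` (f ` K) \<subseteq> (\<lambda>y. a*y + (b*x + c)) ` (Pair x -` K)"
      unfolding f_def by (auto simp: image_iff algebra_simps)
    show "(\<lambda>y. a*y + (b*x + c)) ` (Pair x -` K) \<subseteq> Pair x -` (f ` K)"
    proof
      fix z assume "z \<in> (\<lambda>y. a*y + (b*x + c)) ` (Pair x -` K)"
      then obtain y where y: "(x,y) \<in> K" "z = a*y + (b*x + c)" by auto
      then have "(x,z) = f (x,y)" unfolding f_def by simp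
      then show "z \<in> Pair x -` (f ` K)" using y(1) by (metis image_eqI vimage_eq)
    qed
  qed
  have secb: "Pair x -` K \<in> sets borel" for x
    using Kb by (metis sets_Pair1 sets_lborel)
  have "emeasure lborel (f ` K) = emeasure (lborel \<Otimes>\<^sub>M lborel) (f ` K)" by (simp add: lborel_prod)
  also have "\<dots> = (\<integral>\<^sup>+x. emeasure lborel (Pair x -` (f ` K)) \<partial>lborel)"
    by (rule lborel.emeasure_pair_measure_alt[OF fKb])
  also have "\<dots> = (\<integral>\<^sup>+x. ennreal a * emeasure lborel (Pair x -` K) \<partial>lborel)"
    unfolding sec using emeasure_affine_image_1d'[OF a secb] by simp
  also have "\<dots> = ennreal a * (\<integral>\<^sup>+x. emeasure lborel (Pair x -` K) \<partial>lborel)"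
    by (rule nn_integral_cmult) (rule lborel.measurable_emeasure_Pair[OF Kb])
  also have "(\<integral>\<^sup>+x. emeasure lborel (Pair x -` K) \<partial>lborel) = emeasure (lborel \<Otimes>\<^sub>M lborel) K"
    by (rule lborel.emeasure_pair_measure_alt[OF Kb, symmetric])
  also have "\<dots> = emeasure lborel K" by (simp add: lborel_prod)
  finally have "emeasure lborel (f ` K) = ennreal a * emeasure lborel K" .
  then have "measure lborel (f ` K) = enn2real (ennreal a * emeasure lborel K)"
    by (simp add: measure_def)
  also have "\<dots> = a * measure lborel K" using a by (simp add: enn2real_mult measure_def)
  finally show ?thesis unfolding f_def .
qed



lemma cheb_identity:
  fixes w f g :: "'a \<Rightarrow> real"
  assumes "finite I"
  shows "(\<Sum>i\<in>I. \<Sum>j\<in>I. w i * w j * ((f i - f j) * (g i - g j)))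
       = 2 * ((\<Sum>i\<in>I. w i) * (\<Sum>i\<in>I. w i * f i * g i) - (\<Sum>i\<in>I. w i * f i) * (\<Sum>i\<in>I. w i * g i))"
proof -
  have "(\<Sum>i\<in>I. \<Sum>j\<in>I. w i * w j * ((f i - f j) * (g i - g j)))
      = (\<Sum>i\<in>I. \<Sum>j\<in>I. (w i * f i * g i) * w j + w i * (w j * f j * g j) - (w i * f i) * (w j * g j) - (w i * g i) * (w j * f j))"
    by (intro sum.cong refl) (simp add: algebra_simps)
  also have "\<dots> = (\<Sum>i\<in>I. w i * f i * g i) * (\<Sum>j\<in>I. w j) + (\<Sum>i\<in>I. w i) * (\<Sum>j\<in>I. w j * f j * g j)
       - (\<Sum>i\<in>I. w i * f i) * (\<Sum>j\<in>I. w j * g j) - (\<Sum>i\<in>I. w i * g i) * (\<Sum>j\<in>I. w j * f j)"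
    by (simp only: sum.distrib sum_subtractf sum_product)
  finally show ?thesis by (simp add: algebra_simps)
qed

lemma cheb:
  fixes w f g :: "'a \<Rightarrow> real"
  assumes "finite I" "\<And>i. i \<in> I \<Longrightarrow> w i \<ge> 0"
    "\<And>i j. i \<in> I \<Longrightarrow> j \<in> I \<Longrightarrow> (f i - f j) * (g i - g j) \<ge> 0"
  shows "(\<Sum>i\<in>I. w i * f i) * (\<Sum>i\<in>I. w i * g i) \<le> (\<Sum>i\<in>I. w i) * (\<Sum>i\<in>I. w i * f i * g i)"
proof -
  have "0 \<le> (\<Sum>i\<in>I. \<Sum>j\<in>I. w i * w j * ((f i - f j) * (g i - g j)))"
    using assms by (intro sum_nonneg mult_nonneg_nonneg[OF mult_nonneg_nonneg]) auto
  then show ?thesis unfolding cheb_identity[OF assms(1)] by simp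
qed

lemma cheb_strict:
  fixes w f g :: "'a \<Rightarrow> real"
  assumes "finite I" "\<And>i. i \<in> I \<Longrightarrow> w i > 0"
    "\<And>i j. i \<in> I \<Longrightarrow> j \<in> I \<Longrightarrow> (f i - f j) * (g i - g j) \<ge> 0"
    "a \<in> I" "b \<in> I" "(f a - f b) * (g a - g b) > 0"
  shows "(\<Sum>i\<in>I. w i * f i) * (\<Sum>i\<in>I. w i * g i) < (\<Sum>i\<in>I. w i) * (\<Sum>i\<in>I. w i * f i * g i)"
proof -
  have nn: "\<And>i j. i \<in> I \<Longrightarrow> j \<in> I \<Longrightarrow> 0 \<le> w i * w j * ((f i - f j) * (g i - g j))"
    using assms(2,3) by (simp add: less_imp_le)
  have pa: "0 < (\<Sum>j\<in>I. w a * w j * ((f a - f j) * (g a - g j)))"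
    by (rule sum_pos2[OF assms(1) assms(5)]) (use assms nn in \<open>auto intro: mult_pos_pos\<close>)
  have pi: "\<And>i. i \<in> I \<Longrightarrow> 0 \<le> (\<Sum>j\<in>I. w i * w j * ((f i - f j) * (g i - g j)))"
    using nn by (intro sum_nonneg) auto
  have "0 < (\<Sum>i\<in>I. \<Sum>j\<in>I. w i * w j * ((f i - f j) * (g i - g j)))"
    by (rule sum_pos2[OF assms(1) assms(4)]) (use pa pi in auto)
  then show ?thesis unfolding cheb_identity[OF assms(1)] by simp
qed

lemma gibbs_ineq:
  fixes p q :: "'a \<Rightarrow> real"
  assumes "finite I" "\<And>i. i \<in> I \<Longrightarrow> p i > 0" "\<And>i. i \<in> I \<Longrightarrow> q i > 0"
    "(\<Sum>i\<in>I. p i) = 1" "(\<Sum>i\<in>I. q i) = 1"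
  shows "- (\<Sum>i\<in>I. p i * ln (p i)) \<le> - (\<Sum>i\<in>I. p i * ln (q i))"
proof -
  have "(\<Sum>i\<in>I. p i * ln (q i) - p i * ln (p i)) \<le> (\<Sum>i\<in>I. q i - p i)"
  proof (rule sum_mono)
    fix i assume i: "i \<in> I"
    have "ln (q i / p i) \<le> q i / p i - 1" using assms(2,3)[OF i] by (intro ln_le_minus_one) simp
    then have "p i * ln (q i / p i) \<le> p i * (q i / p i - 1)"
      using assms(2)[OF i] by (intro mult_left_mono) auto
    also have "p i * ln (q i / p i) = p i * ln (q i) - p i * ln (p i)"
      using assms(2,3)[OF i] by (simp add: ln_div right_diff_distrib)
    also have "p i * (q i / p i - 1) = q i - p i" using assms(2)[OF i] by (simp add: field_simps)
    finally show "p i * ln (q i) - p i * ln (p i) \<le> q i - p i" .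
  qed
  also have "\<dots> = 0" using assms(4,5) by (simp add: sum_subtractf)
  finally show ?thesis by (simp add: sum_subtractf)
qed



lemma x_exp_le: fixes x b :: real assumes "x \<ge> 0" "b > 0" shows "x * exp (- b * x) \<le> 1 / b"
proof -
  have "b * x \<le> exp (b * x)" using exp_ge_add_one_self[of "b*x"] by linarith
  then have "b * x * exp (- b * x) \<le> exp (b * x) * exp (- b * x)"
    by (intro mult_right_mono) auto
  also have "exp (b * x) * exp (- b * x) = 1" by (simp add: exp_minus field_simps)
  finally have "b * (x * exp (- b * x)) \<le> 1" by (simp add: mult.assoc)
  then show ?thesis using assms(2) by (simp add: field_simps mult.commute)
qed

locale gibbsfam =
  fixes d :: nat and eps p0 :: "nat \<Rightarrow> real"
  assumes pos: "\<And>i. i < d \<Longrightarrow> p0 i > 0" and sum1: "(\<Sum>i<d. p0 i) = 1"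
    and anti: "\<And>i j. i < d \<Longrightarrow> j < d \<Longrightarrow> eps i < eps j \<Longrightarrow> p0 j \<le> p0 i"
    and inj: "inj_on eps {..<d}" and d2: "d \<ge> 2"
begin

definition w where "w a b i = exp (a * ln (p0 i) - b * eps i)"
definition Z where "Z a b = (\<Sum>i<d. w a b i)"
definition q where "q a b i = w a b i / Z a b"
definition En where "En a b = (\<Sum>i<d. eps i * q a b i)"
definition Ent where "Ent a b = - (\<Sum>i<d. q a b i * ln (q a b i))"

lemma w_pos: "w a b i > 0" unfolding w_def by simp

lemma Z_pos: "Z a b > 0"
proof -
  have "0 \<in> {..<d}" using d2 by simp
  then have "{..<d} \<noteq> {}" by blast
  then show ?thesis unfolding Z_def using w_pos by (intro sum_pos) auto
qed

lemma q_pos: "q a b i > 0" unfolding q_def using w_pos Z_pos by simp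

lemma q_sum: "(\<Sum>i<d. q a b i) = 1"
proof -
  have "(\<Sum>i<d. q a b i) = Z a b / Z a b" unfolding q_def Z_def by (simp add: sum_divide_distrib[symmetric])
  then show ?thesis using Z_pos[of a b] by simp
qed

lemma En_alt: "En a b = (\<Sum>i<d. w a b i * eps i) / Z a b"
  unfolding En_def q_def by (simp add: sum_divide_distrib mult.commute)

lemma two_distinct: "eps 0 \<noteq> eps 1" "0 < d" "1 < d"
  using inj d2 unfolding inj_on_def by fastforce+

lemma En_strict_mono:
  assumes "b1 < b2" shows "En a b2 < En a b1"
proof -
  define r where "r i = exp (- (b2 - b1) * eps i)" for i
  have w2: "w a b2 i = w a b1 i * r i" for i
    unfolding w_def r_def by (simp add: exp_add[symmetric] algebra_simps)
  have co: "0 \<le> (eps i - eps j) * (- r i - - r j)" for i j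
  proof -
    have "eps i \<le> eps j \<longleftrightarrow> r j \<le> r i" unfolding r_def using assms by auto
    then show ?thesis by (cases "eps i \<le> eps j") (auto simp: mult_le_0_iff zero_le_mult_iff)
  qed
  have st: "0 < (eps 0 - eps 1) * (- r 0 - - r 1)"
  proof -
    have "eps 0 < eps 1 \<longleftrightarrow> r 1 < r 0" unfolding r_def using assms by auto
    moreover have "eps 1 < eps 0 \<longleftrightarrow> r 0 < r 1" unfolding r_def using assms by auto
    ultimately show ?thesis using two_distinct(1) by (cases "eps 0 < eps 1") (auto simp: mult_less_0_iff zero_less_mult_iff)
  qed
  have ch: "(\<Sum>i<d. w a b1 i * eps i) * (\<Sum>i<d. w a b1 i * - r i) < (\<Sum>i<d. w a b1 i) * (\<Sum>i<d. w a b1 i * eps i * - r i)"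
    by (rule cheb_strict[where a=0 and b=1]) (use w_pos co st two_distinct in auto)
  have Z2: "Z a b2 = (\<Sum>i<d. w a b1 i * r i)" unfolding Z_def w2 ..
  have "En a b2 = (\<Sum>i<d. w a b1 i * r i * eps i) / (\<Sum>i<d. w a b1 i * r i)"
    unfolding En_alt w2 Z2 ..
  also have "\<dots> < (\<Sum>i<d. w a b1 i * eps i) / Z a b1"
  proof -
    have p1: "(\<Sum>i<d. w a b1 i * r i) > 0" using Z_pos[of a b2] Z2 by simp
    have "(\<Sum>i<d. w a b1 i * r i * eps i) * Z a b1 < (\<Sum>i<d. w a b1 i * eps i) * (\<Sum>i<d. w a b1 i * r i)"
      using ch unfolding Z_def by (simp add: sum_negf algebra_simps)
    then show ?thesis using p1 Z_pos by (simp add: divide_less_eq less_divide_eq mult.commute)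
  qed
  also have "\<dots> = En a b1" unfolding En_alt ..
  finally show ?thesis .
qed

lemma En_inj: "En a b = En a b' \<Longrightarrow> b = b'"
  using En_strict_mono[of b b' a] En_strict_mono[of b' b a] by (cases b b' rule: linorder_cases) auto

definition E0 where "E0 = (\<Sum>i<d. eps i * p0 i)"
definition S0 where "S0 = - (\<Sum>i<d. p0 i * ln (p0 i))"

lemma En_at_0:
  assumes "a \<le> 1" shows "E0 \<le> En a 0"
proof -
  define g where "g i = exp ((a - 1) * ln (p0 i))" for i
  have wg: "w a 0 i = p0 i * g i" if "i < d" for i
  proof -
    have "p0 i * g i = exp (ln (p0 i)) * exp ((a-1) * ln (p0 i))" using pos[OF that] unfolding g_def by simp
    also have "\<dots> = w a 0 i" unfolding w_def by (simp add: exp_add[symmetric] algebra_simps)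
    finally show ?thesis by simp
  qed
  have co: "0 \<le> (eps i - eps j) * (g i - g j)" if "i \<in> {..<d}" "j \<in> {..<d}" for i j
  proof -
    have mono: "g j \<le> g i" if "eps j < eps i" "i < d" "j < d" for i j
    proof -
      have "p0 i \<le> p0 j" using anti that by auto
      then have "ln (p0 i) \<le> ln (p0 j)" using pos that by simp
      then have "(a - 1) * ln (p0 j) \<le> (a - 1) * ln (p0 i)" using assms by (intro mult_left_mono_neg) auto
      then show ?thesis unfolding g_def by simp
    qed
    show ?thesis using mono[of i j] mono[of j i] that
      by (cases "eps i" "eps j" rule: linorder_cases) (auto simp: mult_le_0_iff zero_le_mult_iff)
  qed
  have ch: "(\<Sum>i<d. p0 i * eps i) * (\<Sum>i<d. p0 i * g i) \<le> (\<Sum>i<d. p0 i) * (\<Sum>i<d. p0 i * eps i * g i)"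
    by (rule cheb) (use pos co in \<open>auto intro: less_imp_le\<close>)
  have Zg: "Z a 0 = (\<Sum>i<d. p0 i * g i)" unfolding Z_def using wg by simp
  have "En a 0 = (\<Sum>i<d. p0 i * eps i * g i) / (\<Sum>i<d. p0 i * g i)"
    unfolding En_alt Zg using wg by (simp add: algebra_simps)
  moreover have "E0 * (\<Sum>i<d. p0 i * g i) \<le> (\<Sum>i<d. p0 i * eps i * g i)"
    using ch sum1 unfolding E0_def by (simp add: mult.commute)
  moreover have "(\<Sum>i<d. p0 i * g i) > 0" using Zg Z_pos[of a 0] by simp
  ultimately show ?thesis by (simp add: le_divide_eq)
qed

lemma En_upper:
  assumes m: "m < d" "\<And>i. i < d \<Longrightarrow> eps m \<le> eps i" and a: "a \<ge> 0" and b: "b > 0"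
  shows "En a b \<le> eps m + real d / b"
proof -
  have trm: "w a b i * (eps i - eps m) \<le> w a b m / b" if i: "i < d" for i
  proof (cases "eps i = eps m")
    case True then show ?thesis using w_pos[of a b m] b by simp
  next
    case False
    then have lt: "eps m < eps i" using m(2)[OF i] by simp
    then have "p0 i \<le> p0 m" using anti[OF m(1) i] by simp
    then have "ln (p0 i) \<le> ln (p0 m)" using pos i m(1) by simp
    then have "a * ln (p0 i) \<le> a * ln (p0 m)" using a by (intro mult_left_mono)
    then have "w a b i \<le> exp (a * ln (p0 m) - b * eps i)" unfolding w_def by simp
    also have "\<dots> = w a b m * exp (- b * (eps i - eps m))"
      unfolding w_def by (simp add: exp_add[symmetric] algebra_simps)
    finally have "w a b i * (eps i - eps m) \<le> w a b m * ((eps i - eps m) * exp (- b * (eps i - eps m)))"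
      using lt by (simp add: mult_right_mono mult.assoc mult.commute mult.left_commute)
    also have "\<dots> \<le> w a b m * (1 / b)"
      using x_exp_le[of "eps i - eps m" b] lt b w_pos[of a b m] by (intro mult_left_mono) auto
    finally show ?thesis by simp
  qed
  have "(\<Sum>i<d. w a b i * (eps i - eps m)) \<le> (\<Sum>i<d. w a b m / b)"
    using trm by (intro sum_mono) auto
  also have "\<dots> = real d * (w a b m / b)" by simp
  also have "\<dots> \<le> real d * (Z a b / b)"
  proof -
    have "w a b m \<le> Z a b" unfolding Z_def using m(1) w_pos by (intro member_le_sum) (auto intro: less_imp_le)
    then show ?thesis using b by (intro mult_left_mono divide_right_mono) auto
  qed
  finally have S: "(\<Sum>i<d. w a b i * (eps i - eps m)) \<le> real d * (Z a b / b)" .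
  have "En a b - eps m = (\<Sum>i<d. w a b i * (eps i - eps m)) / Z a b"
    unfolding En_alt using Z_pos[of a b]
    by (simp add: field_simps sum_subtractf sum_distrib_left sum_distrib_right Z_def)
  also have "\<dots> \<le> real d * (Z a b / b) / Z a b" using S Z_pos[of a b] by (intro divide_right_mono) auto
  also have "\<dots> = real d / b" using Z_pos[of a b] by simp
  finally show ?thesis by simp
qed

lemma cont_En:
  assumes "continuous_on S A" "continuous_on S B"
  shows "continuous_on S (\<lambda>t. En (A t) (B t))"
proof -
  have nz: "\<And>t. (\<Sum>i<d. exp (A t * ln (p0 i) - B t * eps i)) \<noteq> 0"
    using Z_pos unfolding Z_def w_def by (metis less_irrefl)
  show ?thesis unfolding En_def q_def Z_def w_def
    by (intro continuous_intros assms) (auto simp: nz)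
qed

lemma cont_Ent:
  assumes "continuous_on S A" "continuous_on S B"
  shows "continuous_on S (\<lambda>t. Ent (A t) (B t))"
proof -
  have nz: "\<And>t. (\<Sum>i<d. exp (A t * ln (p0 i) - B t * eps i)) \<noteq> 0"
    using Z_pos unfolding Z_def w_def by (metis less_irrefl)
  have nz2: "\<And>t i. exp (A t * ln (p0 i) - B t * eps i) / (\<Sum>i<d. exp (A t * ln (p0 i) - B t * eps i)) \<noteq> 0"
    using q_pos unfolding q_def Z_def w_def by (metis less_irrefl)
  show ?thesis unfolding Ent_def q_def Z_def w_def
    by (intro continuous_intros assms) (auto simp: nz nz2)
qed

lemma Ent_at_1:
  assumes b: "b \<ge> 0" shows "Ent 1 b \<le> S0"
proof -
  define r where "r i = exp (- b * eps i)" for i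
  have w1: "w 1 b i = p0 i * r i" if "i < d" for i
  proof -
    have "p0 i * r i = exp (ln (p0 i)) * exp (- b * eps i)" using pos[OF that] unfolding r_def by simp
    also have "\<dots> = w 1 b i" unfolding w_def by (simp add: exp_add[symmetric] algebra_simps)
    finally show ?thesis by simp
  qed
  have g1: "- (\<Sum>i<d. q 1 b i * ln (q 1 b i)) \<le> - (\<Sum>i<d. q 1 b i * ln (p0 i))"
    by (rule gibbs_ineq) (use q_pos pos q_sum sum1 in auto)
  have co: "0 \<le> (- ln (p0 i) - - ln (p0 j)) * (- r i - - r j)" if "i \<in> {..<d}" "j \<in> {..<d}" for i j
  proof -
    have mono: "- ln (p0 j) \<le> - ln (p0 i) \<and> - r j \<le> - r i" if "eps j < eps i" "i < d" "j < d" for i j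
    proof -
      have "p0 i \<le> p0 j" using anti that by auto
      then have "ln (p0 i) \<le> ln (p0 j)" using pos that by simp
      moreover have "r i \<le> r j" unfolding r_def using that b by (simp add: mult_left_mono)
      ultimately show ?thesis by simp
    qed
    have eq: "eps i = eps j \<Longrightarrow> r i = r j" unfolding r_def by simp
    show ?thesis using mono[of i j] mono[of j i] that eq
      by (cases "eps i" "eps j" rule: linorder_cases) (auto simp: mult_le_0_iff zero_le_mult_iff)
  qed
  have ch: "(\<Sum>i<d. p0 i * - ln (p0 i)) * (\<Sum>i<d. p0 i * - r i) \<le> (\<Sum>i<d. p0 i) * (\<Sum>i<d. p0 i * - ln (p0 i) * - r i)"
    by (rule cheb) (use pos co in \<open>auto intro: less_imp_le\<close>)
  have Z1: "Z 1 b = (\<Sum>i<d. p0 i * r i)" unfolding Z_def using w1 by simp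
  have Zp: "(\<Sum>i<d. p0 i * r i) > 0" using Z1 Z_pos[of 1 b] by simp
  have "- (\<Sum>i<d. q 1 b i * ln (p0 i)) = (\<Sum>i<d. p0 i * r i * - ln (p0 i)) / (\<Sum>i<d. p0 i * r i)"
    unfolding q_def Z1 using w1 by (simp add: sum_divide_distrib[symmetric] sum_negf)
  also have "\<dots> \<le> S0"
  proof -
    have "(\<Sum>i<d. p0 i * r i * - ln (p0 i)) \<le> S0 * (\<Sum>i<d. p0 i * r i)"
      using ch sum1 unfolding S0_def by (simp add: sum_negf algebra_simps)
    then show ?thesis using Zp by (simp add: divide_le_eq)
  qed
  finally show ?thesis using g1 unfolding Ent_def by simp
qed

lemma Ent_at_0:
  fixes p1 :: "nat \<Rightarrow> real"
  assumes p1: "\<And>i. i < d \<Longrightarrow> p1 i > 0" "(\<Sum>i<d. p1 i) = 1"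
    and E: "(\<Sum>i<d. eps i * p1 i) = En 0 b"
  shows "- (\<Sum>i<d. p1 i * ln (p1 i)) \<le> Ent 0 b"
proof -
  have lq: "ln (q 0 b i) = - b * eps i - ln (Z 0 b)" for i
    unfolding q_def w_def using Z_pos[of 0 b] by (simp add: ln_div)
  have "- (\<Sum>i<d. p1 i * ln (p1 i)) \<le> - (\<Sum>i<d. p1 i * ln (q 0 b i))"
    by (rule gibbs_ineq) (use p1 q_pos q_sum in auto)
  also have "\<dots> = b * (\<Sum>i<d. eps i * p1 i) + ln (Z 0 b) * (\<Sum>i<d. p1 i)"
    unfolding lq by (simp add: algebra_simps sum.distrib sum_distrib_left sum_distrib_right sum_negf sum_subtractf)
  also have "\<dots> = b * En 0 b + ln (Z 0 b)" using E p1(2) by simp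
  also have "\<dots> = Ent 0 b"
  proof -
    have "Ent 0 b = b * (\<Sum>i<d. eps i * q 0 b i) + ln (Z 0 b) * (\<Sum>i<d. q 0 b i)"
      unfolding Ent_def lq by (simp add: algebra_simps sum.distrib sum_distrib_left sum_distrib_right sum_negf sum_subtractf)
    then show ?thesis using q_sum unfolding En_def by simp
  qed
  finally show ?thesis .
qed

lemma reach:
  fixes p1 :: "nat \<Rightarrow> real" and E1 S1 :: real
  assumes m: "m < d" "\<And>i. i < d \<Longrightarrow> eps m \<le> eps i"
    and E1: "eps m < E1" "E1 \<le> E0"
    and S1: "S0 \<le> S1"
    and p1: "\<And>i. i < d \<Longrightarrow> p1 i > 0" "(\<Sum>i<d. p1 i) = 1"
      "(\<Sum>i<d. eps i * p1 i) = E1" "- (\<Sum>i<d. p1 i * ln (p1 i)) = S1"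
  shows "\<exists>a\<in>{0..1}. \<exists>b\<ge>0. En a b = E1 \<and> Ent a b = S1"
proof -
  define B where "B = 2 * real d / (E1 - eps m)"
  have Bpos: "B > 0" unfolding B_def using E1 d2 by simp
  have ex: "\<exists>b. 0 \<le> b \<and> b \<le> B \<and> En a b = E1" if a: "a \<in> {0..1}" for a
  proof -
    have "En a B \<le> eps m + real d / B" using En_upper[OF m, of a B] a Bpos by auto
    also have "real d / B = (E1 - eps m) / 2" unfolding B_def using E1 d2 by (simp add: field_simps)
    finally have up0: "En a B \<le> eps m + (E1 - eps m) / 2" .
    have up: "En a B \<le> E1" using up0 E1(1) by (simp add: field_simps)
    have lo: "E1 \<le> En a 0" using En_at_0[of a] a E1 by auto
    have c: "continuous_on {0..B} (\<lambda>b. En a b)"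
      using cont_En[of "{0..B}" "\<lambda>_. a" "\<lambda>b. b"] by (simp add: continuous_on_const continuous_on_id)
    show ?thesis using IVT2'[of "\<lambda>b. En a b" B E1 0, OF up lo _ c] Bpos by auto
  qed
  then obtain bf where bf: "\<And>a. a \<in> {0..1} \<Longrightarrow> 0 \<le> bf a \<and> bf a \<le> B \<and> En a (bf a) = E1"
    by metis
  have bfc: "continuous_on {0..1} bf"
    unfolding continuous_on_iff
  proof (intro ballI allI impI)
    fix x e :: real assume x: "x \<in> {0..1}" and e: "0 < e"
    define b0 where "b0 = bf x"
    define lo where "lo = En x (b0 - e/2)"
    define hi where "hi = En x (b0 + e/2)"
    have lo_gt: "lo > E1" unfolding lo_def using En_strict_mono[of "b0 - e/2" b0 x] e bf[OF x] unfolding b0_def by auto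
    have hi_lt: "hi < E1" unfolding hi_def using En_strict_mono[of b0 "b0 + e/2" x] e bf[OF x] unfolding b0_def by auto
    have c1: "continuous_on {0..1} (\<lambda>a. En a (b0 - e/2))"
      using cont_En[of "{0..1}" "\<lambda>a. a" "\<lambda>_. b0 - e/2"] by (simp add: continuous_on_const continuous_on_id)
    have c2: "continuous_on {0..1} (\<lambda>a. En a (b0 + e/2))"
      using cont_En[of "{0..1}" "\<lambda>a. a" "\<lambda>_. b0 + e/2"] by (simp add: continuous_on_const continuous_on_id)
    obtain d1 where d1: "d1 > 0" "\<And>x'. x' \<in> {0..1} \<Longrightarrow> dist x' x < d1 \<Longrightarrow> dist (En x' (b0 - e/2)) lo < lo - E1"
      using c1 x lo_gt unfolding continuous_on_iff lo_def by (metis diff_gt_0_iff_gt)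
    obtain d2 where d2: "d2 > 0" "\<And>x'. x' \<in> {0..1} \<Longrightarrow> dist x' x < d2 \<Longrightarrow> dist (En x' (b0 + e/2)) hi < E1 - hi"
      using c2 x hi_lt unfolding continuous_on_iff hi_def by (metis diff_gt_0_iff_gt)
    show "\<exists>\<delta>>0. \<forall>x'\<in>{0..1}. dist x' x < \<delta> \<longrightarrow> dist (bf x') (bf x) < e"
    proof (intro exI[of _ "min d1 d2"] conjI ballI impI)
      show "min d1 d2 > 0" using d1 d2 by simp
      fix x' assume x': "x' \<in> {0..1}" and dx: "dist x' x < min d1 d2"
      have A: "En x' (b0 - e/2) > E1" using d1(2)[OF x'] dx by (auto simp: dist_real_def)
      have Bh: "En x' (b0 + e/2) < E1" using d2(2)[OF x'] dx by (auto simp: dist_real_def)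
      have E': "En x' (bf x') = E1" using bf[OF x'] by simp
      have g1: "bf x' > b0 - e/2"
      proof (rule ccontr)
        assume "\<not> bf x' > b0 - e/2"
        then have "bf x' \<le> b0 - e/2" by simp
        then have "En x' (b0 - e/2) \<le> En x' (bf x')"
          using En_strict_mono[of "bf x'" "b0 - e/2" x'] by (cases "bf x' = b0 - e/2") auto
        then show False using A E' by simp
      qed
      have g2: "bf x' < b0 + e/2"
      proof (rule ccontr)
        assume "\<not> bf x' < b0 + e/2"
        then have "bf x' \<ge> b0 + e/2" by simp
        then have "En x' (bf x') \<le> En x' (b0 + e/2)"
          using En_strict_mono[of "b0 + e/2" "bf x'" x'] by (cases "bf x' = b0 + e/2") auto
        then show False using Bh E' by simp
      qed
      show "dist (bf x') (bf x) < e" using g1 g2 e unfolding b0_def dist_real_def by auto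
    qed
  qed
  define f where "f a = Ent a (bf a)" for a
  have fc: "continuous_on {0..1} f"
    unfolding f_def using cont_Ent[OF continuous_on_id bfc] by simp
  have f1: "f 1 \<le> S1" unfolding f_def using Ent_at_1[of "bf 1"] bf[of 1] S1 by auto
  have f0: "S1 \<le> f 0" unfolding f_def using Ent_at_0[OF p1(1,2), of "bf 0"] bf[of 0] p1(3,4) by auto
  obtain a where a: "0 \<le> a" "a \<le> 1" "f a = S1" using IVT2'[of f 1 S1 0, OF f1 f0 _ fc] by auto
  then show ?thesis using bf[of a] unfolding f_def by auto
qed

end

context gibbsfam
begin

lemma q_anti:
  assumes a: "0 \<le> a" and b: "0 \<le> b" and ij: "i < d" "j < d" "eps i < eps j"
  shows "q a b j \<le> q a b i"
proof -
  have "p0 j \<le> p0 i" using anti ij by auto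
  then have "ln (p0 j) \<le> ln (p0 i)" using pos ij by simp
  then have "a * ln (p0 j) \<le> a * ln (p0 i)" using a by (intro mult_left_mono)
  moreover have "b * eps i \<le> b * eps j" using b ij by (intro mult_left_mono) auto
  ultimately have "w a b j \<le> w a b i" unfolding w_def by simp
  then show ?thesis unfolding q_def using Z_pos[of a b] by (simp add: divide_right_mono)
qed

lemma hull_q:
  assumes a: "a \<ge> 0"
  shows "hull_area d eps (q a b) = a * hull_area d eps p0"
proof -
  define c where "c = ln (Z a b)"
  define L where "L = (\<lambda>(x::real,y::real). (x, a*y + b*x))"
  define f where "f = (\<lambda>(x::real,y::real). (x, a*y + b*x + c))"
  have linL: "linear L"
    unfolding L_def by (rule linearI) (auto simp: algebra_simps)
  have fL: "f = (\<lambda>z. (0, c) + z) \<circ> L" unfolding f_def L_def by (auto simp: fun_eq_iff)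
  have ens: "eps_s_ensemble d eps (q a b) = f ` eps_s_ensemble d eps p0"
  proof -
    have "- ln (q a b i) = a * (- ln (p0 i)) + b * eps i + c" for i
      unfolding q_def w_def c_def using Z_pos[of a b] by (simp add: ln_div)
    then show ?thesis unfolding eps_s_ensemble_def f_def by (auto simp: image_image)
  qed
  have ch: "convex hull (f ` X) = f ` (convex hull X)" for X
  proof -
    have "convex hull (f ` X) = convex hull ((\<lambda>z. (0, c) + z) ` (L ` X))" unfolding fL by (simp add: image_comp)
    also have "\<dots> = (\<lambda>z. (0, c) + z) ` (convex hull (L ` X))" by (rule convex_hull_translation)
    also have "\<dots> = (\<lambda>z. (0, c) + z) ` (L ` (convex hull X))" by (simp add: convex_hull_linear_image[OF linL])
    also have "\<dots> = f ` (convex hull X)" unfolding fL by (simp add: image_comp)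
    finally show ?thesis .
  qed
  have K: "compact (convex hull eps_s_ensemble d eps p0)"
    by (rule finite_imp_compact_convex_hull) (simp add: eps_s_ensemble_def)
  have "hull_area d eps (q a b) = measure lborel (f ` (convex hull eps_s_ensemble d eps p0))"
    unfolding hull_area_def ens ch ..
  also have "\<dots> = a * hull_area d eps p0"
    unfolding f_def hull_area_def by (rule measure_shear_scale[OF K a])
  finally show ?thesis .
qed

end

lemma hull_area_nonneg: "hull_area d eps p \<ge> 0"
  unfolding hull_area_def by simp

lemma improve:
  assumes d1: "d \<ge> 1" and inj: "inj_on eps {..<d}"
    and P0: "full_rank_passive d eps p0" and P1: "full_rank_passive d eps p1"
    and E: "energy d eps p1 \<le> energy d eps p0" and S: "entropy d p0 \<le> entropy d p1"
  shows "\<exists>q. full_rank_passive d eps q \<and> energy d eps q = energy d eps p1 \<and>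
             entropy d q = entropy d p1 \<and> hull_area d eps q \<le> hull_area d eps p0"
proof (cases "d = 1")
  case True
  have "hull_area d eps p1 = 0"
    unfolding hull_area_def eps_s_ensemble_def True by (simp add: measure_def lessThan_Suc)
  then show ?thesis using P1 hull_area_nonneg[of d eps p0] by auto
next
  case False
  then have d2: "d \<ge> 2" using d1 by simp
  have p0: "\<And>i. i < d \<Longrightarrow> p0 i > 0" "(\<Sum>i<d. p0 i) = 1"
    "\<And>i j. i < d \<Longrightarrow> j < d \<Longrightarrow> eps i < eps j \<Longrightarrow> p0 j \<le> p0 i"
    using P0 unfolding frp_iff by auto
  have p1: "\<And>i. i < d \<Longrightarrow> p1 i > 0" "(\<Sum>i<d. p1 i) = 1"
    using P1 unfolding frp_iff by auto
  interpret G: gibbsfam d eps p0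
    by unfold_locales (use p0 inj d2 in auto)
  have "\<exists>m. m < d \<and> (\<forall>i<d. eps m \<le> eps i)"
  proof -
    have "0 \<in> {..<d}" using d1 by simp
    then have fin: "finite (eps ` {..<d})" "eps ` {..<d} \<noteq> {}" by auto
    then have "Min (eps ` {..<d}) \<in> eps ` {..<d}" by (rule Min_in)
    then obtain m where "m < d" "eps m = Min (eps ` {..<d})" by auto
    then show ?thesis using fin by auto
  qed
  then obtain m where m: "m < d" "\<And>i. i < d \<Longrightarrow> eps m \<le> eps i" by blast
  define E1 where "E1 = energy d eps p1"
  have E1s: "E1 = (\<Sum>i<d. eps i * p1 i)" unfolding E1_def energy_formula ..
  have Em: "eps m < E1"
  proof -
    obtain j where j: "j < d" "j \<noteq> m" using d2 by (metis One_nat_def less_2_cases_iff less_le_trans m(1) not_less_eq_eq numeral_2_eq_2 zero_less_Suc)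
    have "eps j \<noteq> eps m" using inj j m(1) unfolding inj_on_def by auto
    then have ej: "eps m < eps j" using m(2)[OF j(1)] by simp
    have "E1 - eps m = (\<Sum>i<d. p1 i * (eps i - eps m))"
      unfolding E1s using p1(2) by (simp add: algebra_simps sum_subtractf sum_distrib_left[symmetric])
    also have "\<dots> \<ge> p1 j * (eps j - eps m)"
    proof (rule member_le_sum)
      show "j \<in> {..<d}" using j by simp
      show "finite {..<d}" by simp
      fix i assume "i \<in> {..<d} - {j}"
      then have i: "i < d" by simp
      have "0 \<le> p1 i" using p1(1)[OF i] by simp
      moreover have "0 \<le> eps i - eps m" using m(2)[OF i] by simp
      ultimately show "0 \<le> p1 i * (eps i - eps m)" by simp
    qed
    finally show ?thesis using p1(1)[OF j(1)] ej by (smt (verit) mult_pos_pos)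
  qed
  have E0: "G.E0 = energy d eps p0" unfolding G.E0_def energy_formula ..
  have S0: "G.S0 = entropy d p0" unfolding G.S0_def entropy_def ..
  obtain a b where ab: "a \<in> {0..1}" "b \<ge> 0" "G.En a b = E1" "G.Ent a b = entropy d p1"
    using G.reach[OF m Em, of "entropy d p1" p1] E E0 S S0 p1 E1s unfolding entropy_def
    by (auto simp: E1_def)
  define q where "q = G.q a b"
  have Q: "full_rank_passive d eps q"
    unfolding frp_iff q_def using G.q_pos G.q_sum G.q_anti ab(1,2) by auto
  have "energy d eps q = energy d eps p1"
    unfolding energy_formula q_def using ab(3) unfolding G.En_def E1_def energy_formula by (simp add: mult.commute)
  moreover have "entropy d q = entropy d p1" unfolding q_def entropy_def using ab(4) unfolding G.Ent_def entropy_def .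
  moreover have "hull_area d eps q \<le> hull_area d eps p0"
  proof -
    have "hull_area d eps q = a * hull_area d eps p0" unfolding q_def using ab(1) by (intro G.hull_q) auto
    also have "\<dots> \<le> 1 * hull_area d eps p0" using ab(1) hull_area_nonneg[of d eps p0] by (intro mult_right_mono) auto
    finally show ?thesis by simp
  qed
  ultimately show ?thesis using Q by blast
qed

lemma main_mono:
  assumes d1: "d \<ge> 1" and inj: "inj_on eps {..<d}"
    and R0: "(E0, S0) \<in> ES_region d eps" and R1: "(E1, S1) \<in> ES_region d eps"
    and E: "E1 \<le> E0" and S: "S0 \<le> S1"
  shows "geom_athermality d eps E1 S1 \<le> geom_athermality d eps E0 S0"
proof -
  define F0 where "F0 = {hull_area d eps p | p. full_rank_passive d eps p \<and> energy d eps p = E0 \<and> entropy d p = S0}"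
  define F1 where "F1 = {hull_area d eps p | p. full_rank_passive d eps p \<and> energy d eps p = E1 \<and> entropy d p = S1}"
  obtain p1 where p1: "full_rank_passive d eps p1" "energy d eps p1 = E1" "entropy d p1 = S1"
    using R1 unfolding ES_region_def by auto
  obtain p0' where p0': "full_rank_passive d eps p0'" "energy d eps p0' = E0" "entropy d p0' = S0"
    using R0 unfolding ES_region_def by auto
  have ne: "F0 \<noteq> {}" unfolding F0_def using p0' by auto
  have bdd: "bdd_below F1" unfolding F1_def bdd_below_def using hull_area_nonneg by blast
  have "Inf F1 \<le> x" if x: "x \<in> F0" for x
  proof -
    obtain p0 where p0: "x = hull_area d eps p0" "full_rank_passive d eps p0" "energy d eps p0 = E0" "entropy d p0 = S0"
      using x unfolding F0_def by auto
    obtain q where q: "full_rank_passive d eps q" "energy d eps q = energy d eps p1"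
      "entropy d q = entropy d p1" "hull_area d eps q \<le> hull_area d eps p0"
      using improve[OF d1 inj p0(2) p1(1)] p0 p1 E S by auto
    have "hull_area d eps q \<in> F1" unfolding F1_def using q p1 by auto
    then have "Inf F1 \<le> hull_area d eps q" using bdd by (rule cInf_lower)
    then show ?thesis using q(4) p0(1) by simp
  qed
  then have "Inf F1 \<le> Inf F0" using ne by (intro cInf_greatest) auto
  then show ?thesis unfolding geom_athermality_def F0_def F1_def .
qed

lemma curve_mono:
  fixes F F' :: "real \<Rightarrow> real"
  assumes dF: "\<And>t. t \<in> {0..1} \<Longrightarrow> (F has_real_derivative F' t) (at t within {0..1})"
    and nn: "\<And>t. t \<in> {0..1} \<Longrightarrow> F' t \<ge> 0"
    and st: "s \<in> {0..1}" "t \<in> {0..1}" "s \<le> t"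
  shows "F s \<le> F t"
proof (rule DERIV_nonneg_imp_increasing_open[OF st(3)])
  fix x assume x: "s < x" "x < t"
  then have x01: "0 < x" "x < 1" using st by auto
  have "(F has_real_derivative F' x) (at x)"
    using dF[of x] x01 at_within_Icc_at[OF x01] by auto
  then show "\<exists>y. (F has_real_derivative y) (at x) \<and> 0 \<le> y" using nn[of x] x01 by auto
next
  have "continuous_on {0..1} F"
    unfolding continuous_on_eq_continuous_within using dF DERIV_continuous by blast
  then show "continuous_on {s..t} F" by (rule continuous_on_subset) (use st in auto)
qed

theorem theorem3:
  fixes d :: nat and eps :: "nat \<Rightarrow> real"
    and E S E' S' :: "real \<Rightarrow> real"
  assumes d_pos: "d \<ge> 1"
    and nondeg: "inj_on eps {..<d}"
    and in_P: "\<And>t. t \<in> {0..1} \<Longrightarrow> (E t, S t) \<in> ES_region d eps"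
    and dE: "\<And>t. t \<in> {0..1} \<Longrightarrow> (E has_real_derivative E' t) (at t within {0..1})"
    and dS: "\<And>t. t \<in> {0..1} \<Longrightarrow> (S has_real_derivative S' t) (at t within {0..1})"
    and uE: "\<And>t. t \<in> {0..1} \<Longrightarrow> E' t \<le> 0"
    and uS: "\<And>t. t \<in> {0..1} \<Longrightarrow> S' t \<ge> 0"
  shows "\<forall>s\<in>{0..1}. \<forall>t\<in>{0..1}. s \<le> t \<longrightarrow>
           geom_athermality d eps (E t) (S t) \<le> geom_athermality d eps (E s) (S s)"
proof (intro ballI impI)
  fix s t :: real assume st: "s \<in> {0..1}" "t \<in> {0..1}" "s \<le> t"
  have dE': "\<And>t. t \<in> {0..1} \<Longrightarrow> ((\<lambda>x. - E x) has_real_derivative - E' t) (at t within {0..1})"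
    using dE by (intro DERIV_minus) auto
  have "- E s \<le> - E t" by (rule curve_mono[OF dE' _ st]) (use uE in auto)
  then have E: "E t \<le> E s" by simp
  have S: "S s \<le> S t" by (rule curve_mono[OF dS uS st])
  show "geom_athermality d eps (E t) (S t) \<le> geom_athermality d eps (E s) (S s)"
    by (rule main_mono[OF d_pos nondeg in_P[OF st(1)] in_P[OF st(2)] E S])
qed

end
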